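(* Let $g(x_1,\ldots,x_n)=\prod_{j\in\mathcal{J}}\phi_j(x_i:i\in\alpha_j)$ be a global function on a product of finite alphabets with nonnegative local functions, and run the support passing algorithm on its factor graph, initialized by $\lambda(\mu^1_{X\to\phi})=\lambda(\nu^1_{\phi\to X})=\mathcal{X}$ for every variable node $X$ and adjacent factor node $\phi$, where $\mathcal{X}$ is the alphabet of $X$. Then: (1) for all $k$, $\lambda(\mu^{k+1}_{X\to\phi})\subseteq\lambda(\mu^k_{X\to\phi})$ and $\lambda(\nu^{k+1}_{\phi\to X})\subseteq\lambda(\nu^k_{\phi\to X})$; hence after finitely many iterations the supports of all messages remain unchanged; (2) for every variable node $X$ (with value $x$), every adjacent factor node $\phi$ and every $k$, the support of the marginal $x\mapsto\sum_{\text{all variables other than } x}g(x_1,\ldots,x_n)$ is a subset of both $\lambda(\mu^k_{X\to\phi})$ and $\lambda(\nu^k_{\phi\to X})$.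
   Context: Factor graph: for $g=\prod_{j}\phi_j(x_i:i\in\alpha_j)$, the bipartite graph with variable nodes $X_1,\ldots,X_n$, factor nodes $\phi_j$, and an edge $(X_i,\phi_j)$ whenever $x_i\in\alpha_j$; $n(v)$ denotes the set of neighbours of a node $v$. For a function $h$, $\lambda(h)=\{x:h(x)\neq0\}$, and for $h(x,y)$ with $y$ fixed, $\lambda(h(x\mid y))=\{x:h(x,y)\neq0\}$. The support passing algorithm passes sets (supports) $\lambda(\mu^k_{X\to\phi})\subseteq\mathcal{X}$ from variable nodes to factor nodes and $\lambda(\nu^k_{\phi\to X})\subseteq\mathcal{X}$ from factor nodes to variable nodes, updated by $\lambda(\mu^{k+1}_{X\to\phi})=\bigcap_{\psi\in n(X)\setminus\{\phi\}}\lambda(\nu^k_{\psi\to X})$ (empty intersection $=\mathcal{X}$) and $\lambda(\nu^{k+1}_{\phi\to X})=\bigcup\lambda\big(\phi(x\mid x^*:X^*\in n(\phi)\setminus\{X\})\big)$, the union being over all assignments with $x^*\in\lambda(\mu^k_{X^*\to\phi})$ for each $X^*\in n(\phi)\setminus\{X\}$. *)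

theory Defs
  imports Complex_Main "HOL-Library.FuncSet"
begin

text \<open>Factor graph: variable nodes are elements of 'v, factor nodes are elements of 'j,
  alpha j is the scope of factor j, and variable v is adjacent to factor j iff v \<in> alpha j.
  A v is the (finite) alphabet of variable v; phi j is the local function (a function of a
  full assignment that depends only on the coordinates in alpha j).\<close>

text \<open>One step of the support passing algorithm. mu v j is the support of the message
  from variable v to factor j, nu j v the support of the message from factor j to variable v.\<close>

definition sp_mu_step ::
  "('v \<Rightarrow> 'a set) \<Rightarrow> ('j \<Rightarrow> 'v set) \<Rightarrow> ('j \<Rightarrow> 'v \<Rightarrow> 'a set) \<Rightarrow> 'v \<Rightarrow> 'j \<Rightarrow> 'a set" where
  "sp_mu_step A alpha nu v j =
     {a \<in> A v. \<forall>j'. v \<in> alpha j' \<and> j' \<noteq> j \<longrightarrow> a \<in> nu j' v}"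

definition sp_nu_step ::
  "('v \<Rightarrow> 'a set) \<Rightarrow> ('j \<Rightarrow> 'v set) \<Rightarrow> ('j \<Rightarrow> ('v \<Rightarrow> 'a) \<Rightarrow> real)
     \<Rightarrow> ('v \<Rightarrow> 'j \<Rightarrow> 'a set) \<Rightarrow> 'j \<Rightarrow> 'v \<Rightarrow> 'a set" where
  "sp_nu_step A alpha phi mu j v =
     (\<Union>y \<in> {y. \<forall>w \<in> alpha j - {v}. y w \<in> mu w j}.
        {a \<in> A v. phi j (y(v := a)) \<noteq> 0})"

text \<open>Iterates, indexed as in the paper: iteration 1 is the initialization (all supports are
  the full alphabets); index 0 is a dummy equal to iteration 1.\<close>

fun sp_iter ::
  "('v \<Rightarrow> 'a set) \<Rightarrow> ('j \<Rightarrow> 'v set) \<Rightarrow> ('j \<Rightarrow> ('v \<Rightarrow> 'a) \<Rightarrow> real) \<Rightarrow> nat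
     \<Rightarrow> ('v \<Rightarrow> 'j \<Rightarrow> 'a set) \<times> ('j \<Rightarrow> 'v \<Rightarrow> 'a set)" where
  "sp_iter A alpha phi 0 = ((\<lambda>v j. A v), (\<lambda>j v. A v))"
| "sp_iter A alpha phi (Suc 0) = ((\<lambda>v j. A v), (\<lambda>j v. A v))"
| "sp_iter A alpha phi (Suc (Suc k)) =
     (let (mu, nu) = sp_iter A alpha phi (Suc k)
      in (sp_mu_step A alpha nu, sp_nu_step A alpha phi mu))"

definition sp_mu where "sp_mu A alpha phi k = fst (sp_iter A alpha phi k)"
definition sp_nu where "sp_nu A alpha phi k = snd (sp_iter A alpha phi k)"

definition global_fn :: "('j::finite \<Rightarrow> ('v \<Rightarrow> 'a) \<Rightarrow> real) \<Rightarrow> ('v \<Rightarrow> 'a) \<Rightarrow> real" where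
  "global_fn phi x = (\<Prod>j\<in>UNIV. phi j x)"

definition marginal ::
  "('v \<Rightarrow> 'a set) \<Rightarrow> ('j::finite \<Rightarrow> ('v \<Rightarrow> 'a) \<Rightarrow> real) \<Rightarrow> 'v \<Rightarrow> 'a \<Rightarrow> real" where
  "marginal A phi v a = (\<Sum>x \<in> {x \<in> PiE UNIV A. x v = a}. global_fn phi x)"

definition support :: "('b \<Rightarrow> real) \<Rightarrow> 'b set \<Rightarrow> 'b set" where
  "support h S = {s \<in> S. h s \<noteq> 0}"

end

theory Submission
  imports Defs
begin

lemma iter_SS:
  "sp_mu A alpha phi (Suc (Suc k)) = sp_mu_step A alpha (sp_nu A alpha phi (Suc k))"
  "sp_nu A alpha phi (Suc (Suc k)) = sp_nu_step A alpha phi (sp_mu A alpha phi (Suc k))"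
  by (simp_all add: sp_mu_def sp_nu_def split: prod.split)

lemma iter_1:
  "sp_mu A alpha phi (Suc 0) = (\<lambda>v j. A v)" "sp_nu A alpha phi (Suc 0) = (\<lambda>j v. A v)"
  by (simp_all add: sp_mu_def sp_nu_def)

lemma mono_step:
  "sp_mu A alpha phi (Suc (Suc k)) \<le> sp_mu A alpha phi (Suc k) \<and>
   sp_nu A alpha phi (Suc (Suc k)) \<le> sp_nu A alpha phi (Suc k)"
proof (induction k)
  case 0
  show ?case by (auto simp: iter_SS iter_1 le_fun_def sp_mu_step_def sp_nu_step_def)
next
  case (Suc k)
  then have m: "\<And>v j. sp_mu A alpha phi (Suc (Suc k)) v j \<subseteq> sp_mu A alpha phi (Suc k) v j"
    and n: "\<And>v j. sp_nu A alpha phi (Suc (Suc k)) j v \<subseteq> sp_nu A alpha phi (Suc k) j v"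
    by (auto simp: le_fun_def)
  have "sp_mu A alpha phi (Suc (Suc (Suc k))) \<le> sp_mu A alpha phi (Suc (Suc k))"
    unfolding iter_SS(1)[of _ _ _ "Suc k"] iter_SS(1)[of _ _ _ k]
    using n by (auto simp: le_fun_def sp_mu_step_def)
  moreover have "sp_nu A alpha phi (Suc (Suc (Suc k))) \<le> sp_nu A alpha phi (Suc (Suc k))"
    unfolding iter_SS(2)[of _ _ _ "Suc k"] iter_SS(2)[of _ _ _ k]
    unfolding le_fun_def sp_nu_step_def
  proof (intro allI subsetI)
    fix j v a
    assume "a \<in> (\<Union>y\<in>{y. \<forall>w\<in>alpha j - {v}. y w \<in> sp_mu A alpha phi (Suc (Suc k)) w j}.
               {a \<in> A v. phi j (y(v := a)) \<noteq> 0})"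
    then obtain y where "\<forall>w\<in>alpha j - {v}. y w \<in> sp_mu A alpha phi (Suc (Suc k)) w j"
      "a \<in> A v" "phi j (y(v := a)) \<noteq> 0" by blast
    then show "a \<in> (\<Union>y\<in>{y. \<forall>w\<in>alpha j - {v}. y w \<in> sp_mu A alpha phi (Suc k) w j}.
               {a \<in> A v. phi j (y(v := a)) \<noteq> 0})" using m by blast
  qed
  ultimately show ?case by blast
qed

lemma sub_A: "sp_mu A alpha phi k v j \<subseteq> A v \<and> sp_nu A alpha phi k j v \<subseteq> A v"
proof (cases k)
  case 0 then show ?thesis by (simp add: sp_mu_def sp_nu_def)
next
  case (Suc m) then show ?thesis
    by (cases m) (auto simp: iter_SS iter_1 sp_mu_step_def sp_nu_step_def)
qed

lemma good_in:
  assumes "\<And>v. x v \<in> A v" "\<And>j. phi j x \<noteq> 0"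
  shows "x v \<in> sp_mu A alpha phi (Suc k) v j \<and> x v \<in> sp_nu A alpha phi (Suc k) j v"
proof (induction k arbitrary: v j)
  case 0 then show ?case using assms by (simp add: iter_1)
next
  case (Suc k)
  have "x v \<in> sp_mu A alpha phi (Suc (Suc k)) v j"
    using Suc assms by (auto simp: iter_SS sp_mu_step_def)
  moreover have "x v \<in> sp_nu A alpha phi (Suc (Suc k)) j v"
    unfolding iter_SS sp_nu_step_def
  proof -
    have "x(v := x v) = x" by simp
    then show "x v \<in> (\<Union>y\<in>{y. \<forall>w\<in>alpha j - {v}. y w \<in> sp_mu A alpha phi (Suc k) w j}.
        {a \<in> A v. phi j (y(v := a)) \<noteq> 0})"
      using Suc assms by (intro UN_I[of x]) auto
  qed
  ultimately show ?case by blast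
qed

theorem mainTheorem2:
  fixes A :: "'v::finite \<Rightarrow> 'a set"
    and alpha :: "'j::finite \<Rightarrow> 'v set"
    and phi :: "'j \<Rightarrow> ('v \<Rightarrow> 'a) \<Rightarrow> real"
  assumes fin: "\<And>v. finite (A v)"
    and local: "\<And>j x y. (\<forall>w \<in> alpha j. x w = y w) \<Longrightarrow> phi j x = phi j y"
    and nonneg: "\<And>j x. x \<in> PiE UNIV A \<Longrightarrow> phi j x \<ge> 0"
  shows "(\<forall>k \<ge> 1. \<forall>j v. v \<in> alpha j \<longrightarrow>
            sp_mu A alpha phi (Suc k) v j \<subseteq> sp_mu A alpha phi k v j \<and>
            sp_nu A alpha phi (Suc k) j v \<subseteq> sp_nu A alpha phi k j v)
       \<and> (\<exists>K \<ge> 1. \<forall>k \<ge> K. \<forall>j v. v \<in> alpha j \<longrightarrow>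
            sp_mu A alpha phi k v j = sp_mu A alpha phi K v j \<and>
            sp_nu A alpha phi k j v = sp_nu A alpha phi K j v)
       \<and> (\<forall>k \<ge> 1. \<forall>j v. v \<in> alpha j \<longrightarrow>
            support (marginal A phi v) (A v) \<subseteq> sp_mu A alpha phi k v j \<and>
            support (marginal A phi v) (A v) \<subseteq> sp_nu A alpha phi k j v)"
proof (intro conjI)
  show "\<forall>k \<ge> 1. \<forall>j v. v \<in> alpha j \<longrightarrow>
            sp_mu A alpha phi (Suc k) v j \<subseteq> sp_mu A alpha phi k v j \<and>
            sp_nu A alpha phi (Suc k) j v \<subseteq> sp_nu A alpha phi k j v"
  proof (intro allI impI)
    fix k j v assume "k \<ge> (1::nat)"
    then obtain m where k: "k = Suc m" by (cases k) auto
    show "sp_mu A alpha phi (Suc k) v j \<subseteq> sp_mu A alpha phi k v j \<and>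
            sp_nu A alpha phi (Suc k) j v \<subseteq> sp_nu A alpha phi k j v"
      using mono_step[of A alpha phi m] unfolding k le_fun_def by blast
  qed
next
  define g where "g k = sp_mu A alpha phi (Suc k)" for k
  define h where "h k = sp_nu A alpha phi (Suc k)" for k
  have ag: "antimono g" unfolding antimono_iff_le_Suc g_def using mono_step by blast
  have ah: "antimono h" unfolding antimono_iff_le_Suc h_def using mono_step by blast
  define S where "S = (PiE UNIV (\<lambda>v. PiE UNIV (\<lambda>j::'j. Pow (A v))))
     \<times> (PiE UNIV (\<lambda>j::'j. PiE UNIV (\<lambda>v. Pow (A v))))"
  have finS: "finite S" unfolding S_def using fin
    by (intro finite_cartesian_product finite_PiE) auto
  have "(\<lambda>k. (g k, h k)) ` UNIV \<subseteq> S"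
    unfolding S_def g_def h_def using sub_A[of A alpha phi] by (auto simp: PiE_UNIV_domain) blast+
  then have "finite ((\<lambda>k. (g k, h k)) ` UNIV)" using finS finite_subset by blast
  then have "\<not> inj (\<lambda>k. (g k, h k))" using finite_imageD infinite_UNIV_nat by blast
  then obtain i j where ij: "i < j" "g i = g j" "h i = h j"
    unfolding inj_def by (metis linorder_neqE_nat prod.inject)
  have "g (Suc i) \<le> g i" "g j \<le> g (Suc i)" using ag ij(1) by (auto simp: antimono_def)
  then have gi: "g (Suc i) = g i" using ij by auto
  have "h (Suc i) \<le> h i" "h j \<le> h (Suc i)" using ah ij(1) by (auto simp: antimono_def)
  then have hi: "h (Suc i) = h i" using ij by auto
  have gS: "g (Suc m) = sp_mu_step A alpha (h m)" "h (Suc m) = sp_nu_step A alpha phi (g m)" for m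
    unfolding g_def h_def by (simp_all add: iter_SS)
  have const: "g m = g i \<and> h m = h i" if "m \<ge> i" for m
    using that
  proof (induction m rule: dec_induct)
    case base then show ?case by simp
  next
    case (step m)
    then show ?case using gS[of m] gS[of i] gi hi by simp
  qed
  show "\<exists>K \<ge> 1. \<forall>k \<ge> K. \<forall>j v. v \<in> alpha j \<longrightarrow>
            sp_mu A alpha phi k v j = sp_mu A alpha phi K v j \<and>
            sp_nu A alpha phi k j v = sp_nu A alpha phi K j v"
  proof (intro exI[of _ "Suc i"] conjI allI impI)
    fix k j v assume "Suc i \<le> k"
    then obtain m where k: "k = Suc m" "m \<ge> i" by (cases k) auto
    show "sp_mu A alpha phi k v j = sp_mu A alpha phi (Suc i) v j"
      using const[OF k(2)] unfolding k g_def by simp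
    show "sp_nu A alpha phi k j v = sp_nu A alpha phi (Suc i) j v"
      using const[OF k(2)] unfolding k h_def by simp
  qed simp
next
  show "\<forall>k \<ge> 1. \<forall>j v. v \<in> alpha j \<longrightarrow>
            support (marginal A phi v) (A v) \<subseteq> sp_mu A alpha phi k v j \<and>
            support (marginal A phi v) (A v) \<subseteq> sp_nu A alpha phi k j v"
  proof (intro allI impI conjI subsetI)
    fix k j v a assume k1: "k \<ge> (1::nat)" and a: "a \<in> support (marginal A phi v) (A v)"
    then obtain m where k: "k = Suc m" by (cases k) auto
    from a have "(\<Sum>x \<in> {x \<in> PiE UNIV A. x v = a}. global_fn phi x) \<noteq> 0"
      by (simp add: support_def marginal_def)
    then obtain x where x: "x \<in> PiE UNIV A" "x v = a" "global_fn phi x \<noteq> 0"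
      by (metis (mono_tags, lifting) mem_Collect_eq sum.neutral)
    have xA: "\<And>w. x w \<in> A w" using x(1) by auto
    have xp: "\<And>j. phi j x \<noteq> 0" using x(3) by (auto simp: global_fn_def)
    show "a \<in> sp_mu A alpha phi k v j" "a \<in> sp_nu A alpha phi k j v"
      using good_in[of x A phi v alpha m j, OF xA xp] x(2) k by auto
  qed
qed

end
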